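(* In the Poisson algebra $\mathbb C[\mathfrak Z_d]$ one has, for all $r,s$ for which the elements are defined, $\{a_r,a_s\}=0$, $\{a_r,b_s\}=r\,b_{r+s-1}$, and for $r\ge s$, $\{b_r,b_s\}=\sum_{m=s}^{r-1}b_m b_{r+s-m-1}$.
   Context: Let $V=\mathbb C^d$. Let $\mathfrak a=(\mathfrak{gl}(V)\ltimes V)\oplus(\mathfrak{gl}(V)\ltimes V^* )$ with basis $e_{ij}$ (standard matrix units of the first copy of $\mathfrak{gl}(V)$), $e'_{ij}$ (standard matrix units of the second copy), $q_i$ (a basis of $V$), $p_i$ (a basis of $V^*$), $1\le i,j\le d$, with brackets the standard $\mathfrak{gl}$ brackets among the $e_{ij}$ and among the $e'_{ij}$, $[e_{ij},q_k]=\delta_{jk}q_i$, $[e'_{ij},p_k]=-\delta_{ki}p_j$, and all other brackets of basis elements ($[e_{ij},e'_{kl}],[e_{ij},p_k],[e'_{ij},q_k],[p_k,q_l],[q_k,q_l],[p_k,p_l]$) zero. The symmetric algebra $S(\mathfrak a)=\mathbb C[\mathfrak a^*]$ carries the Lie–Poisson bracket. Let $\mathfrak{gl}(V)_{\rm diag}$ be spanned by $e_{ij}+e'_{ij}$. Define the Poisson algebra (Hamiltonian reduction) $\mathbb C[\mathfrak Z_d]:=\big(S(\mathfrak a)/S(\mathfrak a)\mathfrak{gl}(V)_{\rm diag}\big)^{\mathfrak{gl}(V)_{\rm diag}}$ with the induced bracket; it is identified with $\mathbb C[e_{ij},q_i,p_i]^{\mathfrak{gl}(V)}$. Set $a_r=\sum_{i_1,\dots,i_r}e_{i_1i_2}e_{i_2i_3}\cdots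 e_{i_ri_1}$ ($r\ge1$) and $b_s=\sum_{i_1,\dots,i_{s+1}}p_{i_1}e_{i_1i_2}\cdots e_{i_si_{s+1}}q_{i_{s+1}}$ ($s\ge 0$). *)

theory Defs
  imports Complex_Main "HOL-Library.Poly_Mapping"
begin

text \<open>Basis of the Lie algebra a = (gl(V) x| V) + (gl(V) x| V^*), indices 0..d-1:
  E i j = e_ij, E' i j = e'_ij, Q i = q_i, P i = p_i.\<close>
datatype var = E nat nat | E' nat nat | Q nat | P nat

text \<open>Polynomials over complex numbers in the variables var (symmetric algebra S(a)).\<close>
type_synonym poly = "(var \<Rightarrow>\<^sub>0 nat) \<Rightarrow>\<^sub>0 complex"

definition X :: "var \<Rightarrow> poly" where
  "X v = Poly_Mapping.single (Poly_Mapping.single v 1) 1"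

definition pd :: "var \<Rightarrow> poly \<Rightarrow> poly" where
  "pd v f = (\<Sum>m\<in>Poly_Mapping.keys f. Poly_Mapping.single (m - Poly_Mapping.single v (1::nat))
      (of_nat (Poly_Mapping.lookup m v) * Poly_Mapping.lookup f m :: complex))"

definition vars :: "nat \<Rightarrow> var set" where
  "vars d = (\<lambda>(i,j). E i j) ` ({..<d} \<times> {..<d}) \<union> (\<lambda>(i,j). E' i j) ` ({..<d} \<times> {..<d})
            \<union> Q ` {..<d} \<union> P ` {..<d}"

definition kd :: "nat \<Rightarrow> nat \<Rightarrow> poly" where
  "kd i j = (if i = j then 1 else 0)"

fun lie :: "var \<Rightarrow> var \<Rightarrow> poly" where
  "lie (E i j) (E k l) = kd j k * X (E i l) - kd l i * X (E k j)"
| "lie (E' i j) (E' k l) = kd j k * X (E' i l) - kd l i * X (E' k j)"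
| "lie (E i j) (Q k) = kd j k * X (Q i)"
| "lie (Q k) (E i j) = - (kd j k * X (Q i))"
| "lie (E' i j) (P k) = - (kd k i * X (P j))"
| "lie (P k) (E' i j) = kd k i * X (P j)"
| "lie _ _ = 0"

definition pb :: "nat \<Rightarrow> poly \<Rightarrow> poly \<Rightarrow> poly" where
  "pb d f g = (\<Sum>x\<in>vars d. \<Sum>y\<in>vars d. pd x f * pd y g * lie x y)"

text \<open>Congruence modulo the left ideal S(a) gl(V)_diag (S(a) commutative).\<close>
definition cong_diag :: "nat \<Rightarrow> poly \<Rightarrow> poly \<Rightarrow> bool" where
  "cong_diag d f g \<longleftrightarrow> (\<exists>c :: nat \<Rightarrow> nat \<Rightarrow> poly.
      f - g = (\<Sum>i<d. \<Sum>j<d. c i j * (X (E i j) + X (E' i j))))"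

text \<open>Representatives of a_r and b_s (in the e, q, p variables).\<close>
definition a_el :: "nat \<Rightarrow> nat \<Rightarrow> poly" where
  "a_el d r = (\<Sum>is\<in>{is. length is = r \<and> set is \<subseteq> {..<d}}.
                 \<Prod>k<r. X (E (is ! k) (is ! ((k + 1) mod r))))"

definition b_el :: "nat \<Rightarrow> nat \<Rightarrow> poly" where
  "b_el d s = (\<Sum>is\<in>{is. length is = s + 1 \<and> set is \<subseteq> {..<d}}.
                 X (P (is ! 0)) * (\<Prod>k<s. X (E (is ! k) (is ! (k + 1)))) * X (Q (is ! s)))"

end

theory Submission
  imports Defs
begin

lemma lk_minus_nat: "Poly_Mapping.lookup (m - s) k = Poly_Mapping.lookup m k - (Poly_Mapping.lookup s k :: nat)"
  by (simp add: minus_poly_mapping.rep_eq)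

lemma pd_lookup: "Poly_Mapping.lookup (pd v f) n = of_nat (Poly_Mapping.lookup n v + 1) * Poly_Mapping.lookup f (n + Poly_Mapping.single v 1)"
proof -
  let ?sv = "Poly_Mapping.single v (1::nat)"
  have pt: "(of_nat (Poly_Mapping.lookup m v) * Poly_Mapping.lookup f m when m - ?sv = n) =
        (if m = n + ?sv then of_nat (Poly_Mapping.lookup n v + 1) * Poly_Mapping.lookup f m else 0)" for m
  proof (cases "m = n + ?sv")
    case True
    then show ?thesis by (simp add: lookup_add)
  next
    case False
    have "\<not> (m - ?sv = n \<and> Poly_Mapping.lookup m v \<noteq> 0)"
    proof
      assume a: "m - ?sv = n \<and> Poly_Mapping.lookup m v \<noteq> 0"
      have "m = n + ?sv"
        by (rule poly_mapping_eqI) (use a in \<open>auto simp: lk_minus_nat lookup_add lookup_single when_def\<close>)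
      with False show False by simp
    qed
    with False show ?thesis by (auto simp: when_def)
  qed
  have "Poly_Mapping.lookup (pd v f) n = (\<Sum>m\<in>Poly_Mapping.keys f. of_nat (Poly_Mapping.lookup m v) * Poly_Mapping.lookup f m when m - ?sv = n)"
    by (simp add: pd_def lookup_sum lookup_single)
  also have "\<dots> = (\<Sum>m\<in>Poly_Mapping.keys f. if m = n + ?sv then of_nat (Poly_Mapping.lookup n v + 1) * Poly_Mapping.lookup f m else 0)"
    by (rule sum.cong[OF refl], rule pt)
  also have "\<dots> = of_nat (Poly_Mapping.lookup n v + 1) * Poly_Mapping.lookup f (n + ?sv)"
    by (simp add: sum.delta' in_keys_iff)
  finally show ?thesis .
qed

lemma pd_add: "pd v (f + g) = pd v f + pd v g"
  by (rule poly_mapping_eqI) (simp add: pd_lookup lookup_add algebra_simps)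

lemma pd_zero[simp]: "pd v 0 = 0"
  by (rule poly_mapping_eqI) (simp add: pd_lookup)

lemma pd_uminus: "pd v (- f) = - pd v f"
  by (rule poly_mapping_eqI) (simp add: pd_lookup)

lemma pd_diff: "pd v (f - g) = pd v f - pd v g"
  by (rule poly_mapping_eqI) (simp add: pd_lookup lookup_minus algebra_simps)

lemma pd_sum: "pd v (sum F A) = (\<Sum>a\<in>A. pd v (F a))"
  by (induction A rule: infinite_finite_induct) (auto simp: pd_add)

lemma pd_single: "pd v (Poly_Mapping.single m c) = Poly_Mapping.single (m - Poly_Mapping.single v 1) (of_nat (Poly_Mapping.lookup m v) * c)"
proof (rule poly_mapping_eqI)
  fix n
  let ?sv = "Poly_Mapping.single v (1::nat)"
  show "Poly_Mapping.lookup (pd v (Poly_Mapping.single m c)) n = Poly_Mapping.lookup (Poly_Mapping.single (m - ?sv) (of_nat (Poly_Mapping.lookup m v) * c)) n"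
  proof (cases "m = n + ?sv")
    case True
    then show ?thesis by (simp add: pd_lookup lookup_add)
  next
    case False
    have "\<not> (m - ?sv = n \<and> Poly_Mapping.lookup m v \<noteq> 0)"
    proof
      assume a: "m - ?sv = n \<and> Poly_Mapping.lookup m v \<noteq> 0"
      have "m = n + ?sv"
        by (rule poly_mapping_eqI) (use a in \<open>auto simp: lk_minus_nat lookup_add lookup_single when_def\<close>)
      with False show False by simp
    qed
    with False show ?thesis by (auto simp: pd_lookup lookup_single when_def)
  qed
qed

lemma single_shift:
  assumes "Poly_Mapping.lookup m v \<noteq> 0"
  shows "m - Poly_Mapping.single v 1 + n = m + n - Poly_Mapping.single v (1::nat)"
  by (rule poly_mapping_eqI) (use assms in \<open>auto simp: lk_minus_nat lookup_add lookup_single when_def\<close>)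

lemma pd_mult_single: "pd v (Poly_Mapping.single m a * Poly_Mapping.single n b)
   = pd v (Poly_Mapping.single m a) * Poly_Mapping.single n b + Poly_Mapping.single m a * pd v (Poly_Mapping.single n b)"
proof -
  let ?sv = "Poly_Mapping.single v (1::nat)"
  have 1: "Poly_Mapping.single (m - ?sv + n) (of_nat (Poly_Mapping.lookup m v) * a * b)
        = Poly_Mapping.single (m + n - ?sv) (of_nat (Poly_Mapping.lookup m v) * a * b)"
    using single_shift[of m v n] by (cases "Poly_Mapping.lookup m v = 0") simp_all
  have 2: "Poly_Mapping.single (m + (n - ?sv)) (a * (of_nat (Poly_Mapping.lookup n v) * b))
        = Poly_Mapping.single (m + n - ?sv) (of_nat (Poly_Mapping.lookup n v) * a * b)"
    using single_shift[of n v m] by (cases "Poly_Mapping.lookup n v = 0") (simp_all add: add.commute mult_ac)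
  have L: "pd v (Poly_Mapping.single m a * Poly_Mapping.single n b) =
     Poly_Mapping.single (m + n - ?sv) (of_nat (Poly_Mapping.lookup m v) * a * b + of_nat (Poly_Mapping.lookup n v) * a * b)"
    by (simp add: mult_single pd_single lookup_add algebra_simps)
  have R: "pd v (Poly_Mapping.single m a) * Poly_Mapping.single n b + Poly_Mapping.single m a * pd v (Poly_Mapping.single n b)
     = Poly_Mapping.single (m - ?sv + n) (of_nat (Poly_Mapping.lookup m v) * a * b) +
       Poly_Mapping.single (m + (n - ?sv)) (a * (of_nat (Poly_Mapping.lookup n v) * b))"
    by (simp only: mult_single pd_single)
  show ?thesis unfolding L R 1 2 single_add ..

qed

lemma poly_decomp: "f = (\<Sum>m\<in>Poly_Mapping.keys f. Poly_Mapping.single m (Poly_Mapping.lookup f m))"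
  by (rule poly_mapping_eqI) (simp add: lookup_sum lookup_single when_def sum.delta' in_keys_iff)

lemma pd_mult: "pd v (f * g) = pd v f * g + f * pd v g"
proof -
  define F where "F m = Poly_Mapping.single m (Poly_Mapping.lookup f m)" for m
  define G where "G m = Poly_Mapping.single m (Poly_Mapping.lookup g m)" for m
  have f: "f = (\<Sum>m\<in>Poly_Mapping.keys f. F m)" unfolding F_def by (rule poly_decomp)
  have g: "g = (\<Sum>m\<in>Poly_Mapping.keys g. G m)" unfolding G_def by (rule poly_decomp)
  have "pd v ((\<Sum>m\<in>Poly_Mapping.keys f. F m) * (\<Sum>n\<in>Poly_Mapping.keys g. G n)) =
     pd v (\<Sum>m\<in>Poly_Mapping.keys f. F m) * (\<Sum>n\<in>Poly_Mapping.keys g. G n) + (\<Sum>m\<in>Poly_Mapping.keys f. F m) * pd v (\<Sum>n\<in>Poly_Mapping.keys g. G n)"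
    by (simp add: sum_distrib_left sum_distrib_right pd_sum F_def G_def pd_mult_single sum.distrib)
  with f g show ?thesis by metis
qed

lemma pd_X: "pd v (X w) = (if v = w then 1 else 0)"
  by (auto simp: X_def pd_single lookup_single)

lemma pd_one[simp]: "pd v 1 = 0"
  by (metis pd_single single_one lookup_zero mult_zero_left of_nat_0 single_zero)

lemma pd_of_nat[simp]: "pd v (of_nat n) = 0"
  by (metis pd_single single_of_nat lookup_zero mult_zero_left of_nat_0 single_zero)

lemma pd_kd[simp]: "pd v (kd i j) = 0"
  by (simp add: kd_def)

lemma lie_antisym: "lie y x = - lie x y"
  by (cases x; cases y) (simp_all add: algebra_simps)

lemma pb_zero_left[simp]: "pb d 0 h = 0" by (simp add: pb_def)
lemma pb_zero_right[simp]: "pb d h 0 = 0" by (simp add: pb_def)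

lemma pb_add_left: "pb d (f + g) h = pb d f h + pb d g h"
  by (simp add: pb_def pd_add algebra_simps sum.distrib)

lemma lie_aux: "a * b * lie x y = - (b * a * lie y x)"
  by (simp add: lie_antisym[of y x] mult.commute)

lemma pb_antisym: "pb d f g = - pb d g f"
proof -
  have "pb d g f = (\<Sum>y\<in>vars d. \<Sum>x\<in>vars d. pd x g * pd y f * lie x y)"
    unfolding pb_def by (rule sum.swap)
  also have "\<dots> = (\<Sum>y\<in>vars d. \<Sum>x\<in>vars d. - (pd y f * pd x g * lie y x))"
    by (intro sum.cong refl) (rule lie_aux)
  also have "\<dots> = - pb d f g" unfolding pb_def by (simp add: sum_negf)
  finally show ?thesis by simp
qed

lemma pb_add_right: "pb d h (f + g) = pb d h f + pb d h g"
  by (simp add: pb_def pd_add algebra_simps sum.distrib)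

lemma pb_sum_left: "pb d (sum F A) h = (\<Sum>a\<in>A. pb d (F a) h)"
  by (induction A rule: infinite_finite_induct) (simp_all add: pb_add_left)

lemma pb_sum_right: "pb d h (sum F A) = (\<Sum>a\<in>A. pb d h (F a))"
  by (induction A rule: infinite_finite_induct) (simp_all add: pb_add_right)

lemma pb_mult_left: "pb d (f * g) h = f * pb d g h + g * pb d f h"
  by (simp add: pb_def pd_mult algebra_simps sum.distrib sum_distrib_left)

lemma pb_mult_right: "pb d h (f * g) = f * pb d h g + g * pb d h f"
  by (simp add: pb_def pd_mult algebra_simps sum.distrib sum_distrib_left)

lemma pb_diff_left: "pb d (f - g) h = pb d f h - pb d g h"
  by (simp add: pb_def pd_diff algebra_simps sum_subtractf)

lemma pb_diff_right: "pb d h (f - g) = pb d h f - pb d h g"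
  by (simp add: pb_def pd_diff algebra_simps sum_subtractf)

lemma pb_uminus_left: "pb d (- f) h = - pb d f h"
  by (simp add: pb_def pd_uminus sum_negf)

lemma pb_uminus_right: "pb d h (- f) = - pb d h f"
  by (simp add: pb_def pd_uminus sum_negf)

lemma pb_kd_left[simp]: "pb d (kd i j) h = 0" by (simp add: pb_def)
lemma pb_kd_right[simp]: "pb d h (kd i j) = 0" by (simp add: pb_def)
lemma pb_ofnat_left[simp]: "pb d (of_nat n) h = 0" by (simp add: pb_def)
lemma pb_ofnat_right[simp]: "pb d h (of_nat n) = 0" by (simp add: pb_def)

lemma finite_vars: "finite (vars d)" by (simp add: vars_def)

lemma pb_X: assumes "x \<in> vars d" "y \<in> vars d" shows "pb d (X x) (X y) = lie x y"
proof -
  have "pb d (X x) (X y) = (\<Sum>x'\<in>vars d. if x' = x then (\<Sum>y'\<in>vars d. if y' = y then lie x' y' else 0) else 0)"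
    unfolding pb_def by (intro sum.cong refl) (auto simp: pd_X intro!: sum.cong)
  also have "\<dots> = lie x y" using assms by (simp add: sum.delta finite_vars)
  finally show ?thesis .
qed


lemma vars_E[simp]: "E i j \<in> vars d \<longleftrightarrow> i < d \<and> j < d" by (auto simp: vars_def)
lemma vars_Q[simp]: "Q i \<in> vars d \<longleftrightarrow> i < d" by (auto simp: vars_def)
lemma vars_P[simp]: "P i \<in> vars d \<longleftrightarrow> i < d" by (auto simp: vars_def)

lemma br_EE: "i<d \<Longrightarrow> j<d \<Longrightarrow> k<d \<Longrightarrow> l<d \<Longrightarrow>
   pb d (X (E i j)) (X (E k l)) = kd j k * X (E i l) - kd l i * X (E k j)"
  by (simp add: pb_X)
lemma br_EQ: "i<d \<Longrightarrow> j<d \<Longrightarrow> k<d \<Longrightarrow> pb d (X (E i j)) (X (Q k)) = kd j k * X (Q i)"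
  by (simp add: pb_X)
lemma br_QE: "i<d \<Longrightarrow> j<d \<Longrightarrow> k<d \<Longrightarrow> pb d (X (Q k)) (X (E i j)) = - (kd j k * X (Q i))"
  by (simp add: pb_X)
lemma br_EP: "i<d \<Longrightarrow> j<d \<Longrightarrow> k<d \<Longrightarrow> pb d (X (E i j)) (X (P k)) = 0"
  by (simp add: pb_X)
lemma br_PE: "i<d \<Longrightarrow> j<d \<Longrightarrow> k<d \<Longrightarrow> pb d (X (P k)) (X (E i j)) = 0"
  by (simp add: pb_X)
lemma br_QQ: "i<d \<Longrightarrow> k<d \<Longrightarrow> pb d (X (Q k)) (X (Q i)) = 0"
  by (simp add: pb_X)
lemma br_PQ: "i<d \<Longrightarrow> k<d \<Longrightarrow> pb d (X (P k)) (X (Q i)) = 0"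
  by (simp add: pb_X)
lemma br_QP: "i<d \<Longrightarrow> k<d \<Longrightarrow> pb d (X (Q k)) (X (P i)) = 0"
  by (simp add: pb_X)
lemma br_PP: "i<d \<Longrightarrow> k<d \<Longrightarrow> pb d (X (P k)) (X (P i)) = 0"
  by (simp add: pb_X)

lemma kd_sum1[simp]: "k < d \<Longrightarrow> (\<Sum>m<d. kd m k * f m) = f k"
proof -
  assume k: "k < d"
  have "(\<Sum>m<d. kd m k * f m) = (\<Sum>m<d. if m = k then f m else 0)"
    by (intro sum.cong refl) (auto simp: kd_def)
  also have "\<dots> = f k" using k by (simp add: sum.delta)
  finally show ?thesis .
qed

lemma kd_sum2[simp]: "k < d \<Longrightarrow> (\<Sum>m<d. kd k m * f m) = f k"
proof -
  assume k: "k < d"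
  have "(\<Sum>m<d. kd k m * f m) = (\<Sum>m<d. if m = k then f m else 0)"
    by (intro sum.cong refl) (auto simp: kd_def)
  also have "\<dots> = f k" using k by (simp add: sum.delta)
  finally show ?thesis .
qed

lemma kd_sum3[simp]: "k < d \<Longrightarrow> (\<Sum>m<d. f m * kd m k) = f k"
proof -
  assume k: "k < d"
  have "(\<Sum>m<d. f m * kd m k) = (\<Sum>m<d. if m = k then f m else 0)"
    by (intro sum.cong refl) (auto simp: kd_def)
  also have "\<dots> = f k" using k by (simp add: sum.delta)
  finally show ?thesis .
qed

lemma kd_sum4[simp]: "k < d \<Longrightarrow> (\<Sum>m<d. f m * kd k m) = f k"
proof -
  assume k: "k < d"
  have "(\<Sum>m<d. f m * kd k m) = (\<Sum>m<d. if m = k then f m else 0)"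
    by (intro sum.cong refl) (auto simp: kd_def)
  also have "\<dots> = f k" using k by (simp add: sum.delta)
  finally show ?thesis .
qed

fun vg :: "nat \<Rightarrow> (nat \<Rightarrow> poly) \<Rightarrow> nat \<Rightarrow> nat \<Rightarrow> poly" where
  "vg d g 0 i = g i"
| "vg d g (Suc n) i = (\<Sum>m<d. X (E i m) * vg d g n m)"

definition Mx :: "nat \<Rightarrow> nat \<Rightarrow> nat \<Rightarrow> nat \<Rightarrow> poly" where
  "Mx d n i j = vg d (\<lambda>m. kd m j) n i"

abbreviation vq :: "nat \<Rightarrow> nat \<Rightarrow> nat \<Rightarrow> poly" where
  "vq d n i \<equiv> vg d (\<lambda>j. X (Q j)) n i"

lemma pb_one_left[simp]: "pb d 1 h = 0" by (simp add: pb_def)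
lemma pb_one_right[simp]: "pb d h 1 = 0" by (simp add: pb_def)

lemma Mx_0: "Mx d 0 i j = kd i j" by (simp add: Mx_def)
lemma Mx_Suc: "Mx d (Suc n) i j = (\<Sum>m<d. X (E i m) * Mx d n m j)" by (simp add: Mx_def)

lemma vg_comp: "i < d \<Longrightarrow> (\<Sum>j<d. Mx d a i j * vg d g b j) = vg d g (a + b) i"
proof (induction a arbitrary: i)
  case 0
  then show ?case by (simp add: Mx_0)
next
  case (Suc a)
  have "(\<Sum>j<d. Mx d (Suc a) i j * vg d g b j) = (\<Sum>j<d. \<Sum>m<d. X (E i m) * (Mx d a m j * vg d g b j))"
    by (simp add: Mx_Suc sum_distrib_right mult.assoc)
  also have "\<dots> = (\<Sum>m<d. X (E i m) * (\<Sum>j<d. Mx d a m j * vg d g b j))"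
    by (subst sum.swap) (simp add: sum_distrib_left)
  also have "\<dots> = (\<Sum>m<d. X (E i m) * vg d g (a + b) m)"
    by (intro sum.cong refl) (simp add: Suc.IH)
  finally show ?case by simp
qed

lemma M_E: "i<d \<Longrightarrow> j<d \<Longrightarrow> k<d \<Longrightarrow> l<d \<Longrightarrow>
  pb d (Mx d n i j) (X (E k l)) = kd j k * Mx d n i l - kd l i * Mx d n k j"
proof (induction n arbitrary: i)
  case 0
  then show ?case by (simp add: Mx_0, simp add: kd_def)
next
  case (Suc n)
  have "pb d (Mx d (Suc n) i j) (X (E k l)) =
     (\<Sum>m<d. kd j k * (X (E i m) * Mx d n m l) + kd m k * (Mx d n m j * X (E i l))
            - (X (E i m) * Mx d n k j) * kd l m - kd l i * (X (E k m) * Mx d n m j))"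
    unfolding Mx_Suc pb_sum_left
    by (intro sum.cong refl) (simp add: pb_mult_left Suc br_EE algebra_simps)
  also have "\<dots> = kd j k * (\<Sum>m<d. X (E i m) * Mx d n m l) + (\<Sum>m<d. kd m k * (Mx d n m j * X (E i l)))
            - (\<Sum>m<d. (X (E i m) * Mx d n k j) * kd l m) - kd l i * (\<Sum>m<d. X (E k m) * Mx d n m j)"
    by (simp add: sum.distrib sum_subtractf sum_distrib_left)
  also have "\<dots> = kd j k * Mx d (Suc n) i l - kd l i * Mx d (Suc n) k j"
    using Suc by (simp add: Mx_Suc mult.commute)
  finally show ?case .
qed

lemma Q_M: "i<d \<Longrightarrow> j<d \<Longrightarrow> k<d \<Longrightarrow>
  pb d (X (Q k)) (Mx d n i j) = - (\<Sum>a<n. vq d a i * Mx d (n - Suc a) k j)"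
proof (induction n arbitrary: i)
  case 0
  then show ?case by (simp add: Mx_0)
next
  case (Suc n)
  have "pb d (X (Q k)) (Mx d (Suc n) i j) =
     (\<Sum>m<d. - (\<Sum>a<n. X (E i m) * vq d a m * Mx d (n - Suc a) k j) - kd m k * (Mx d n m j * X (Q i)))"
    unfolding Mx_Suc pb_sum_right
    by (intro sum.cong refl) (simp add: pb_mult_right Suc br_QE algebra_simps sum_distrib_left)
  also have "\<dots> = - (\<Sum>a<n. \<Sum>m<d. X (E i m) * vq d a m * Mx d (n - Suc a) k j) - Mx d n k j * X (Q i)"
    using Suc by (simp add: sum_subtractf sum_negf) (subst sum.swap, simp)
  also have "\<dots> = - (\<Sum>a<n. vq d (Suc a) i * Mx d (n - Suc a) k j) - Mx d n k j * X (Q i)"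
    by (simp add: sum_distrib_right)
  also have "\<dots> = - (\<Sum>a<Suc n. vq d a i * Mx d (Suc n - Suc a) k j)"
    unfolding sum.lessThan_Suc_shift by (simp add: algebra_simps del: vg.simps(2))
  finally show ?case .
qed

definition A :: "nat \<Rightarrow> nat \<Rightarrow> poly" where "A d r = (\<Sum>i<d. Mx d r i i)"
definition B :: "nat \<Rightarrow> nat \<Rightarrow> poly" where "B d s = (\<Sum>i<d. X (P i) * vq d s i)"

lemma A_E: "k<d \<Longrightarrow> l<d \<Longrightarrow> pb d (A d r) (X (E k l)) = 0"
proof -
  assume kl: "k<d" "l<d"
  have "pb d (A d r) (X (E k l)) = (\<Sum>i<d. kd i k * Mx d r i l - kd l i * Mx d r k i)"
    unfolding A_def pb_sum_left by (intro sum.cong refl) (simp add: M_E kl)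
  also have "\<dots> = 0" using kl by (simp add: sum_subtractf)
  finally show ?thesis .
qed

lemma E_A: "k<d \<Longrightarrow> l<d \<Longrightarrow> pb d (X (E k l)) (A d r) = 0"
  by (subst pb_antisym) (simp add: A_E)

lemma Q_A: "k<d \<Longrightarrow> pb d (X (Q k)) (A d r) = - (of_nat r * vq d (r - 1) k)"
proof -
  assume k: "k<d"
  have "pb d (X (Q k)) (A d r) = - (\<Sum>i<d. \<Sum>a<r. Mx d (r - Suc a) k i * vq d a i)"
    unfolding A_def pb_sum_right by (simp add: Q_M k sum_negf mult.commute)
  also have "\<dots> = - (\<Sum>a<r. \<Sum>i<d. Mx d (r - Suc a) k i * vq d a i)"
    by (subst sum.swap) simp
  also have "\<dots> = - (\<Sum>a<r. vq d (r - 1) k)"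
    by (intro arg_cong[where f=uminus] sum.cong refl) (simp add: vg_comp k)
  finally show ?thesis by simp
qed

lemma vg_zero:
  assumes h1: "\<And>i j. i<d \<Longrightarrow> j<d \<Longrightarrow> pb d h (X (E i j)) = 0"
    and h2: "\<And>j. j<d \<Longrightarrow> pb d h (g j) = 0"
  shows "i<d \<Longrightarrow> pb d h (vg d g n i) = 0"
proof (induction n arbitrary: i)
  case 0
  then show ?case by (simp add: h2)
next
  case (Suc n)
  then show ?case by (simp add: pb_sum_right pb_mult_right h1)
qed

lemma A_Q: "k<d \<Longrightarrow> pb d (A d r) (X (Q k)) = of_nat r * vq d (r - 1) k"
  by (subst pb_antisym) (simp add: Q_A)

lemma A_P: "k<d \<Longrightarrow> pb d (A d r) (X (P k)) = 0"
proof -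
  assume k: "k<d"
  have "pb d (X (P k)) (Mx d r i i) = 0" if "i<d" for i
    unfolding Mx_def by (rule vg_zero) (simp_all add: br_PE k that)
  then have "pb d (X (P k)) (A d r) = 0" by (simp add: A_def pb_sum_right)
  then show ?thesis by (subst pb_antisym) simp
qed

lemma A_A: "pb d (A d r) (A d s) = 0"
proof -
  have "pb d (A d r) (Mx d s i i) = 0" if "i<d" for i
    unfolding Mx_def by (rule vg_zero) (simp_all add: A_E that)
  then show ?thesis by (simp add: A_def[of d s] pb_sum_right)
qed

lemma A_vq: "1 \<le> r \<Longrightarrow> i<d \<Longrightarrow> pb d (A d r) (vq d s i) = of_nat r * vq d (r + s - 1) i"
proof (induction s arbitrary: i)
  case 0
  then show ?case by (simp add: A_Q)
next
  case (Suc s)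
  have "pb d (A d r) (vq d (Suc s) i) = (\<Sum>m<d. X (E i m) * (of_nat r * vq d (r + s - 1) m))"
    unfolding vg.simps pb_sum_right by (intro sum.cong refl) (simp add: pb_mult_right A_E Suc.IH[OF Suc.prems(1)] Suc.prems)
  also have "\<dots> = of_nat r * vq d (r + Suc s - 1) i"
  proof -
    have e: "r + Suc s - 1 = Suc (r + s - 1)" using Suc.prems by simp
    show ?thesis unfolding e vg.simps sum_distrib_left by (simp add: mult.left_commute)
  qed
  finally show ?case .
qed

lemma A_B: "1 \<le> r \<Longrightarrow> pb d (A d r) (B d s) = of_nat r * B d (r + s - 1)"
proof -
  assume r: "1 \<le> r"
  show ?thesis unfolding B_def pb_sum_right sum_distrib_left
    by (intro sum.cong refl) (simp add: pb_mult_right A_vq[OF r] A_P mult.left_commute)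
qed

lemma E_vq: "k<d \<Longrightarrow> l<d \<Longrightarrow> j<d \<Longrightarrow> pb d (X (E k l)) (vq d s j) = kd l j * vq d s k"
proof (induction s arbitrary: j)
  case 0
  then show ?case by (simp add: br_EQ)
next
  case (Suc s)
  have "pb d (X (E k l)) (vq d (Suc s) j) =
     (\<Sum>m<d. (X (E j m) * vq d s k) * kd l m + kd l j * (X (E k m) * vq d s m) - kd m k * (vq d s m * X (E j l)))"
    unfolding vg.simps pb_sum_right
    by (intro sum.cong refl) (simp add: pb_mult_right Suc br_EE algebra_simps)
  also have "\<dots> = (\<Sum>m<d. (X (E j m) * vq d s k) * kd l m) + kd l j * (\<Sum>m<d. X (E k m) * vq d s m)
      - (\<Sum>m<d. kd m k * (vq d s m * X (E j l)))"
    by (simp add: sum.distrib sum_subtractf sum_distrib_left)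
  also have "\<dots> = kd l j * vq d (Suc s) k"
    using Suc.prems by (simp add: mult.commute)
  finally show ?case .
qed

lemma Q_vq: "i<d \<Longrightarrow> j<d \<Longrightarrow>
  pb d (X (Q i)) (vq d s j) = - (\<Sum>a<s. vq d a j * vq d (s - Suc a) i)"
proof (induction s arbitrary: j)
  case 0
  then show ?case by (simp add: br_QQ)
next
  case (Suc s)
  have "pb d (X (Q i)) (vq d (Suc s) j) =
     (\<Sum>m<d. - (\<Sum>a<s. X (E j m) * vq d a m * vq d (s - Suc a) i) - kd m i * (vq d s m * X (Q j)))"
    unfolding vg.simps(2)[of d _ s] pb_sum_right
    by (intro sum.cong refl) (simp add: pb_mult_right Suc br_QE algebra_simps sum_distrib_left)
  also have "\<dots> = - (\<Sum>a<s. \<Sum>m<d. X (E j m) * vq d a m * vq d (s - Suc a) i) - vq d s i * X (Q j)"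
    using Suc.prems by (simp add: sum_subtractf sum_negf) (subst sum.swap, simp)
  also have "\<dots> = - (\<Sum>a<s. vq d (Suc a) j * vq d (s - Suc a) i) - vq d s i * X (Q j)"
    by (simp add: sum_distrib_right)
  also have "\<dots> = - (\<Sum>a<Suc s. vq d a j * vq d (Suc s - Suc a) i)"
    unfolding sum.lessThan_Suc_shift by (simp add: algebra_simps del: vg.simps(2))
  finally show ?case .
qed

lemma E_B: "k<d \<Longrightarrow> l<d \<Longrightarrow> pb d (X (E k l)) (B d s) = X (P l) * vq d s k"
proof -
  assume kl: "k<d" "l<d"
  have "pb d (X (E k l)) (B d s) = (\<Sum>i<d. (X (P i) * vq d s k) * kd l i)"
    unfolding B_def pb_sum_right
    by (intro sum.cong refl) (simp add: pb_mult_right E_vq br_EP kl algebra_simps)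
  also have "\<dots> = X (P l) * vq d s k" using kl by simp
  finally show ?thesis .
qed

lemma Q_B: "i<d \<Longrightarrow> pb d (X (Q i)) (B d s) = - (\<Sum>a<s. B d a * vq d (s - Suc a) i)"
proof -
  assume i: "i<d"
  have "pb d (X (Q i)) (B d s) = - (\<Sum>j<d. \<Sum>a<s. X (P j) * vq d a j * vq d (s - Suc a) i)"
    unfolding B_def pb_sum_right sum_negf[symmetric]
    by (intro sum.cong refl) (simp add: pb_mult_right Q_vq br_QP i sum_distrib_left algebra_simps sum_negf)
  also have "\<dots> = - (\<Sum>a<s. B d a * vq d (s - Suc a) i)"
    by (subst sum.swap) (simp add: B_def sum_distrib_right)
  finally show ?thesis .
qed

lemma P_vq: "k<d \<Longrightarrow> j<d \<Longrightarrow> pb d (X (P k)) (vq d s j) = 0"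
  by (rule vg_zero) (simp_all add: br_PE br_PQ)

lemma P_B: "k<d \<Longrightarrow> pb d (X (P k)) (B d s) = 0"
  unfolding B_def pb_sum_right
  by (intro sum.neutral ballI) (simp add: pb_mult_right P_vq br_PP)

lemma vq_B: "i<d \<Longrightarrow> pb d (vq d r i) (B d s) =
   (\<Sum>c<r. B d c * vq d (s + r - Suc c) i) - (\<Sum>a<s. B d a * vq d (s + r - Suc a) i)"
proof (induction r arbitrary: i)
  case 0
  then show ?case by (simp add: Q_B)
next
  case (Suc r)
  have "pb d (vq d (Suc r) i) (B d s) =
    (\<Sum>m<d. (\<Sum>c<r. B d c * (X (E i m) * vq d (s + r - Suc c) m))
          - (\<Sum>a<s. B d a * (X (E i m) * vq d (s + r - Suc a) m)) + (X (P m) * vq d r m) * vq d s i)"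
    unfolding vg.simps(2)[of d _ r] pb_sum_left
    by (intro sum.cong refl) (simp add: pb_mult_left Suc E_B algebra_simps sum_distrib_left)
  also have "\<dots> = (\<Sum>c<r. B d c * vq d (Suc (s + r - Suc c)) i)
          - (\<Sum>a<s. B d a * vq d (Suc (s + r - Suc a)) i) + B d r * vq d s i"
    by (simp add: sum.distrib sum_subtractf B_def sum_distrib_left sum_distrib_right)
       (subst (1 2) sum.swap, simp)
  also have "\<dots> = (\<Sum>c<Suc r. B d c * vq d (s + Suc r - Suc c) i)
          - (\<Sum>a<s. B d a * vq d (s + Suc r - Suc a) i)"
  proof -
    have 1: "(\<Sum>c<r. B d c * vq d (Suc (s + r - Suc c)) i) = (\<Sum>c<r. B d c * vq d (s + Suc r - Suc c) i)"
      by (intro sum.cong refl) (simp add: Suc_diff_Suc)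
    have 2: "(\<Sum>a<s. B d a * vq d (Suc (s + r - Suc a)) i) = (\<Sum>a<s. B d a * vq d (s + Suc r - Suc a) i)"
      by (intro sum.cong refl) (simp add: Suc_diff_Suc)
    show ?thesis unfolding 1 2 by simp
  qed
  finally show ?case .
qed

lemma B_B: "pb d (B d r) (B d s) =
   (\<Sum>c<r. B d c * B d (s + r - Suc c)) - (\<Sum>a<s. B d a * B d (s + r - Suc a))"
proof -
  have "pb d (B d r) (B d s) = (\<Sum>i<d. (\<Sum>c<r. B d c * (X (P i) * vq d (s + r - Suc c) i))
           - (\<Sum>a<s. B d a * (X (P i) * vq d (s + r - Suc a) i)))"
    unfolding B_def[of d r] pb_sum_left
    by (intro sum.cong refl) (simp add: pb_mult_left vq_B P_B algebra_simps sum_distrib_left)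
  also have "\<dots> = (\<Sum>c<r. B d c * B d (s + r - Suc c)) - (\<Sum>a<s. B d a * B d (s + r - Suc a))"
    by (simp add: sum_subtractf B_def[of d "_ - _"] sum_distrib_left) (subst (1 2) sum.swap, simp)
  finally show ?thesis .
qed

lemma lists_Suc: "{xs. length xs = Suc n \<and> set xs \<subseteq> S} = (\<lambda>(x,xs). x#xs) ` (S \<times> {xs. length xs = n \<and> set xs \<subseteq> S})"
  by (auto simp: length_Suc_conv image_iff)

lemma finite_lists: "finite S \<Longrightarrow> finite {xs. length xs = n \<and> set xs \<subseteq> S}"
  using finite_lists_length_eq[of S n] by (simp add: conj_commute)

lemma sum_lists_Suc: "finite S \<Longrightarrow> (\<Sum>xs\<in>{xs. length xs = Suc n \<and> set xs \<subseteq> S}. f xs)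
   = (\<Sum>x\<in>S. \<Sum>xs\<in>{xs. length xs = n \<and> set xs \<subseteq> S}. f (x#xs))"
proof -
  assume fA: "finite S"
  have inj: "inj_on (\<lambda>(x,xs). x#xs) (S \<times> {xs. length xs = n \<and> set xs \<subseteq> S})"
    by (auto simp: inj_on_def)
  show ?thesis
    unfolding lists_Suc sum.reindex[OF inj]
    by (simp add: sum.cartesian_product split_def)
qed

lemma lists_0: "{xs. length xs = 0 \<and> set xs \<subseteq> S} = {[]}" by auto
lemma lists_0': "{xs. xs = [] \<and> set xs \<subseteq> S} = {[]}" by auto

lemma path_sum: "i < d \<Longrightarrow>
  (\<Sum>xs\<in>{xs. length xs = n \<and> set xs \<subseteq> {..<d}}.
      (\<Prod>k<n. X (E ((i#xs)!k) ((i#xs)!(k+1)))) * g ((i#xs)!n)) = vg d g n i"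
proof (induction n arbitrary: i)
  case 0
  then show ?case by (simp add: lists_0 lists_0')
next
  case (Suc n)
  have "(\<Sum>xs\<in>{xs. length xs = Suc n \<and> set xs \<subseteq> {..<d}}.
      (\<Prod>k<Suc n. X (E ((i#xs)!k) ((i#xs)!(k+1)))) * g ((i#xs)!Suc n))
    = (\<Sum>x<d. \<Sum>xs\<in>{xs. length xs = n \<and> set xs \<subseteq> {..<d}}.
      X (E i x) * ((\<Prod>k<n. X (E ((x#xs)!k) ((x#xs)!(k+1)))) * g ((x#xs)!n)))"
    by (simp add: sum_lists_Suc prod.lessThan_Suc_shift mult.assoc del: prod.lessThan_Suc)
  also have "\<dots> = (\<Sum>x<d. X (E i x) * vg d g n x)"
    by (intro sum.cong refl) (simp add: sum_distrib_left[symmetric] Suc.IH[simplified])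
  finally show ?case by simp
qed

lemma b_el_B: "b_el d s = B d s"
proof -
  have "b_el d s = (\<Sum>i<d. \<Sum>xs\<in>{xs. length xs = s \<and> set xs \<subseteq> {..<d}}.
      X (P i) * ((\<Prod>k<s. X (E ((i#xs)!k) ((i#xs)!(k+1)))) * X (Q ((i#xs)!s))))"
    unfolding b_el_def by (simp add: sum_lists_Suc mult.assoc)
  also have "\<dots> = B d s"
  proof (unfold B_def, intro sum.cong refl)
    fix i assume "i \<in> {..<d}"
    then have i: "i < d" by simp
    show "(\<Sum>xs\<in>{xs. length xs = s \<and> set xs \<subseteq> {..<d}}.
      X (P i) * ((\<Prod>k<s. X (E ((i#xs)!k) ((i#xs)!(k+1)))) * X (Q ((i#xs)!s)))) = X (P i) * vq d s i"
      unfolding sum_distrib_left[symmetric] path_sum[where g="\<lambda>j. X (Q j)", OF i] ..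
  qed
  finally show ?thesis .
qed

lemma vg_as_Mx: "i<d \<Longrightarrow> vg d g n i = (\<Sum>j<d. Mx d n i j * g j)"
  using vg_comp[of i d n g 0] by simp

lemma Mx_1: "j<d \<Longrightarrow> i<d \<Longrightarrow> Mx d 1 j i = X (E j i)"
  by (simp add: Mx_def)

lemma a_el_A: "a_el d (Suc n) = A d (Suc n)"
proof -
  have pr: "(\<Prod>k<Suc n. X (E ((i#xs)!k) ((i#xs)!((k + 1) mod Suc n))))
     = (\<Prod>k<n. X (E ((i#xs)!k) ((i#xs)!(k+1)))) * X (E ((i#xs)!n) i)" for i xs
  proof -
    have "(\<Prod>k<n. X (E ((i#xs)!k) ((i#xs)!((k + 1) mod Suc n)))) = (\<Prod>k<n. X (E ((i#xs)!k) ((i#xs)!(k+1))))"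
      by (intro prod.cong refl) simp
    then show ?thesis by simp
  qed
  have "a_el d (Suc n) = (\<Sum>i<d. \<Sum>xs\<in>{xs. length xs = n \<and> set xs \<subseteq> {..<d}}.
      (\<Prod>k<n. X (E ((i#xs)!k) ((i#xs)!(k+1)))) * X (E ((i#xs)!n) i))"
    unfolding a_el_def sum_lists_Suc[OF finite_lessThan] pr ..
  also have "\<dots> = (\<Sum>i<d. vg d (\<lambda>j. X (E j i)) n i)"
  proof (intro sum.cong refl)
    fix i assume "i \<in> {..<d}"
    then have i: "i < d" by simp
    show "(\<Sum>xs\<in>{xs. length xs = n \<and> set xs \<subseteq> {..<d}}.
      (\<Prod>k<n. X (E ((i#xs)!k) ((i#xs)!(k+1)))) * X (E ((i#xs)!n) i)) = vg d (\<lambda>j. X (E j i)) n i"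
      by (rule path_sum[where g="\<lambda>j. X (E j i)", OF i])
  qed
  also have "\<dots> = (\<Sum>i<d. Mx d (Suc n) i i)"
  proof (intro sum.cong refl)
    fix i assume i: "i \<in> {..<d}"
    have "vg d (\<lambda>j. X (E j i)) n i = (\<Sum>j<d. Mx d n i j * Mx d 1 j i)"
      using i by (simp add: vg_as_Mx, intro sum.cong refl, simp add: Mx_def)
    also have "\<dots> = Mx d (Suc n) i i"
      using vg_comp[of i d n "\<lambda>m. kd m i" 1] i by (simp add: Mx_def)
    finally show "vg d (\<lambda>j. X (E j i)) n i = Mx d (Suc n) i i" .
  qed
  finally show ?thesis by (simp add: A_def)
qed

lemma cong_eq: "f = g \<Longrightarrow> cong_diag d f g"
  unfolding cong_diag_def by (rule exI[of _ "\<lambda>_ _. 0"]) simp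

theorem proposition3p6:
  fixes d :: nat
  shows "(\<forall>r s. r \<ge> 1 \<longrightarrow> s \<ge> 1 \<longrightarrow> cong_diag d (pb d (a_el d r) (a_el d s)) 0)
       \<and> (\<forall>r s. r \<ge> 1 \<longrightarrow>
            cong_diag d (pb d (a_el d r) (b_el d s)) (of_nat r * b_el d (r + s - 1)))
       \<and> (\<forall>r s. s \<le> r \<longrightarrow>
            cong_diag d (pb d (b_el d r) (b_el d s))
              (\<Sum>m=s..<r. b_el d m * b_el d (r + s - m - 1)))"
proof (intro conjI allI impI)
  fix r s :: nat
  assume r: "1 \<le> r" and s: "1 \<le> s"
  obtain r' where r': "r = Suc r'" using r by (cases r) auto
  obtain s' where s': "s = Suc s'" using s by (cases s) auto
  show "cong_diag d (pb d (a_el d r) (a_el d s)) 0"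
    by (rule cong_eq) (simp add: r' s' a_el_A A_A)
next
  fix r s :: nat
  assume r: "1 \<le> r"
  obtain r' where r': "r = Suc r'" using r by (cases r) auto
  show "cong_diag d (pb d (a_el d r) (b_el d s)) (of_nat r * b_el d (r + s - 1))"
    by (rule cong_eq) (simp only: r' a_el_A b_el_B A_B[OF r[unfolded r']])
next
  fix r s :: nat
  assume sr: "s \<le> r"
  define f where "f c = B d c * B d (s + r - Suc c)" for c
  have "pb d (b_el d r) (b_el d s) = (\<Sum>c<r. f c) - (\<Sum>c<s. f c)"
    by (simp add: b_el_B B_B f_def)
  also have "\<dots> = (\<Sum>c=s..<r. f c)"
    using sum.atLeastLessThan_concat[of 0 s r f] sr by (simp add: lessThan_atLeast0) (metis add_diff_cancel_left')
  also have "\<dots> = (\<Sum>m=s..<r. b_el d m * b_el d (r + s - m - 1))"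
    by (intro sum.cong refl) (simp add: f_def b_el_B add.commute)
  finally show "cong_diag d (pb d (b_el d r) (b_el d s)) (\<Sum>m=s..<r. b_el d m * b_el d (r + s - m - 1))"
    by (rule cong_eq)
qed

end
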